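(* Let $K=[x_1,x_2]\times[y_1,y_2]\in T_h$, $h_x=x_2-x_1$, $h_y=y_2-y_1$. For $w,v\in U_h$, $$\int_{\partial K}n\cdot(A^c\nabla w)(\Pi_h^*v-v)\,ds=\frac{h_y^3h_x}{24}a^c_{11}v_{xy}w_{xy}+\frac{h_yh_x^3}{24}a^c_{22}v_{xy}w_{xy},$$ where $n$ is the outward unit normal of $K$, and $w_{xy},v_{xy}$ are the (constant) mixed derivatives of $w|_K$, $v|_K$.
   Context: $\Omega\subset\mathbb{R}^2$ is an open rectangle, $T_h$ a conforming partition of $\overline\Omega$ into closed rectangles with sides parallel to the axes, $N_h$ its set of nodes. $A=(a_{ij})_{2\times2}\in[W^{1,\infty}(\Omega)]^{2\times2}$, and $A^c=(a^c_{ij})$ is its piecewise constant approximation: $A^c|_K=\frac{1}{|K|}\int_KA$. The dual partition $T_h^*$ is obtained by connecting the center of each element to the midpoints of its edges; the control volume $K_P^*$ of a node $P$ is the union of the resulting sub-rectangles having $P$ as a vertex. $U_h=\{v\in C^0(\overline\Omega): v|_K\in Q_1(K)\ \forall K,\ v|_{\partial\Omega}=0\}$ ($Q_1$ = bilinear polynomials). $\Pi_h^*v=\sum_{P\in N_h}v(P)\chi_P$, $\chi_P$ the characteristic function of $K_P^*$. *)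

theory Defs
  imports "HOL-Analysis.Analysis"
begin

text \<open>An element (closed axis-parallel rectangle) is encoded by its lower-left and
upper-right corners: E = ((x1,y1),(x2,y2)) stands for [x1,x2] x [y1,y2].\<close>

type_synonym pt = "real \<times> real"
type_synonym elem = "pt \<times> pt"

definition elem_set :: "elem \<Rightarrow> pt set" where
  "elem_set E = cbox (fst E) (snd E)"

definition verts :: "elem \<Rightarrow> pt set" where
  "verts E = (case E of ((a,b),(c,d)) \<Rightarrow> {(a,b),(c,b),(a,d),(c,d)})"

definition faces :: "elem \<Rightarrow> pt set set" where
  "faces E = (case E of ((a,b),(c,d)) \<Rightarrow>
     {{(a,b)},{(c,b)},{(a,d)},{(c,d)},
      cbox (a,b) (c,b), cbox (c,b) (c,d), cbox (a,d) (c,d), cbox (a,b) (a,d)})"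

definition conforming_partition :: "pt set \<Rightarrow> elem set \<Rightarrow> bool" where
  "conforming_partition \<Omega> T \<longleftrightarrow>
     finite T \<and>
     (\<forall>E\<in>T. fst (fst E) < fst (snd E) \<and> snd (fst E) < snd (snd E)) \<and>
     \<Union>(elem_set ` T) = closure \<Omega> \<and>
     (\<forall>E\<in>T. \<forall>E'\<in>T. E \<noteq> E' \<longrightarrow>
        elem_set E \<inter> elem_set E' = {} \<or> elem_set E \<inter> elem_set E' \<in> faces E \<inter> faces E')"

definition nodes :: "elem set \<Rightarrow> pt set" where
  "nodes T = \<Union>(verts ` T)"

definition sub_rects :: "elem \<Rightarrow> elem set" where
  "sub_rects E = (case E of ((a,b),(c,d)) \<Rightarrow>
     let m = (a + c) / 2; n = (b + d) / 2 in
     {((a,b),(m,n)), ((m,b),(c,n)), ((a,n),(m,d)), ((m,n),(c,d))})"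

definition ctrl_vol :: "elem set \<Rightarrow> pt \<Rightarrow> pt set" where
  "ctrl_vol T P = \<Union>{elem_set S | S. S \<in> (\<Union>E\<in>T. sub_rects E) \<and> P \<in> verts S}"

definition Pi_star :: "elem set \<Rightarrow> (pt \<Rightarrow> real) \<Rightarrow> pt \<Rightarrow> real" where
  "Pi_star T v x = (\<Sum>P\<in>nodes T. v P * indicator (ctrl_vol T P) x)"

definition q1 :: "real \<Rightarrow> real \<Rightarrow> real \<Rightarrow> real \<Rightarrow> pt \<Rightarrow> real" where
  "q1 c0 c1 c2 c3 p = c0 + c1 * fst p + c2 * snd p + c3 * fst p * snd p"

definition grad_q1 :: "real \<Rightarrow> real \<Rightarrow> real \<Rightarrow> real \<Rightarrow> pt \<Rightarrow> pt" where
  "grad_q1 c0 c1 c2 c3 p = (c1 + c3 * snd p, c2 + c3 * fst p)"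

definition Uh :: "pt set \<Rightarrow> elem set \<Rightarrow> (pt \<Rightarrow> real) set" where
  "Uh \<Omega> T = {v. continuous_on (closure \<Omega>) v \<and>
     (\<forall>E\<in>T. \<exists>c0 c1 c2 c3. \<forall>p\<in>elem_set E. v p = q1 c0 c1 c2 c3 p) \<and>
     (\<forall>p\<in>frontier \<Omega>. v p = 0)}"

text \<open>Piecewise constant approximation: mean value over an element.\<close>
definition cavg :: "elem \<Rightarrow> (pt \<Rightarrow> real) \<Rightarrow> real" where
  "cavg E a = integral (elem_set E) a / Henstock_Kurzweil_Integration.content (elem_set E)"

text \<open>Boundary integral over the boundary of the rectangle E of (n . F) g ds, n the
outward unit normal, written out edge by edge.\<close>
definition bdry_int :: "elem \<Rightarrow> (pt \<Rightarrow> pt) \<Rightarrow> (pt \<Rightarrow> real) \<Rightarrow> real" where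
  "bdry_int E F g = (case E of ((x1,y1),(x2,y2)) \<Rightarrow>
       integral {y1..y2} (\<lambda>y. fst (F (x2,y)) * g (x2,y))
     - integral {y1..y2} (\<lambda>y. fst (F (x1,y)) * g (x1,y))
     + integral {x1..x2} (\<lambda>x. snd (F (x,y2)) * g (x,y2))
     - integral {x1..x2} (\<lambda>x. snd (F (x,y1)) * g (x,y1)))"

end

theory Submission
  imports Defs
begin


lemma cbox_pair_eq_iff:
  fixes a b c d a' b' c' d' :: real
  assumes "a\<le>c" "b\<le>d" "a'\<le>c'" "b'\<le>d'"
  shows "cbox (a,b) (c,d) = cbox (a',b') (c',d') \<longleftrightarrow> a=a' \<and> b=b' \<and> c=c' \<and> d=d'"
  using assms by (auto simp: cbox_Pair_eq times_eq_iff)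

lemma faces_alt: "faces ((a,b),(c,d)) = {cbox (a,b) (a,b), cbox (c,b) (c,b), cbox (a,d) (a,d), cbox (c,d) (c,d),
      cbox (a,b) (c,b), cbox (c,b) (c,d), cbox (a,d) (c,d), cbox (a,b) (a,d)}"
  by (simp add: faces_def)

lemma box_in_faces:
  fixes a b c d u1 u2 v1 v2 :: real
  assumes "a<c" "b<d" "u1 \<le> v1" "u2 \<le> v2" "cbox (u1,u2) (v1,v2) \<in> faces ((a,b),(c,d))"
  shows "(u1=a \<or> u1 = c) \<and> (v1=a \<or> v1 = c) \<and> (u2=b \<or> u2 = d) \<and> (v2=b \<or> v2 = d) \<and> (u1 = v1 \<or> u2 = v2)"
  using assms(5) unfolding faces_alt insert_iff empty_iff
  using assms(1-4) by (elim disjE; simp add: cbox_pair_eq_iff del: cbox_idem)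

lemma verts_alt: "verts ((a,b),(c,d)) = {(a,b),(c,b),(a,d),(c,d)}" by (simp add: verts_def)

lemma coord_lemma:
  fixes a b c d a' b' c' d' p1 p2 :: real
  assumes "a<c" "b<d" "a'<c'" "b'<d'" "F \<in> faces ((a,b),(c,d))" "F \<in> faces ((a',b'),(c',d'))"
    "(p1,p2) \<in> F" "(p1,p2) \<in> verts ((a',b'),(c',d'))"
  shows "(p1,p2) \<in> verts ((a,b),(c,d))"
proof -
  obtain u1 u2 v1 v2 where Fd: "F = cbox (u1,u2) (v1,v2)" "u1 \<le> v1" "u2 \<le> v2"
    using assms(5) assms(1,2) unfolding faces_alt by (auto simp del: cbox_idem)
  have h1: "(u1=a \<or> u1 = c) \<and> (v1=a \<or> v1 = c) \<and> (u2=b \<or> u2 = d) \<and> (v2=b \<or> v2 = d) \<and> (u1 = v1 \<or> u2 = v2)"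
    using box_in_faces[OF assms(1,2) Fd(2,3)] assms(5) Fd(1) by simp
  have h2: "(u1=a' \<or> u1 = c') \<and> (v1=a' \<or> v1 = c') \<and> (u2=b' \<or> u2 = d') \<and> (v2=b' \<or> v2 = d') \<and> (u1 = v1 \<or> u2 = v2)"
    using box_in_faces[OF assms(3,4) Fd(2,3)] assms(6) Fd(1) by simp
  have m: "u1 \<le> p1" "p1 \<le> v1" "u2 \<le> p2" "p2 \<le> v2" using assms(7) Fd(1) by auto
  have pv: "(p1 = a' \<or> p1 = c') \<and> (p2 = b' \<or> p2 = d')" using assms(8) by (auto simp: verts_alt)
  have "(p1 = a \<or> p1 = c) \<and> (p2 = b \<or> p2 = d)"
    using h1 h2 m pv assms(1-4) by argo
  then show ?thesis by (auto simp: verts_alt)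
qed

lemma face_shape:
  fixes a b c d :: real
  assumes "a<c" "b<d" "F \<in> faces ((a,b),(c,d))"
  obtains u1 u2 v1 v2 where "F = cbox (u1,u2) (v1,v2)" "u1 \<le> v1" "u2 \<le> v2"
    "(u1=a \<or> u1 = c) \<and> (v1=a \<or> v1 = c) \<and> (u2=b \<or> u2 = d) \<and> (v2=b \<or> v2 = d) \<and> (u1 = v1 \<or> u2 = v2)"
proof -
  obtain u1 u2 v1 v2 where Fd: "F = cbox (u1,u2) (v1,v2)" "u1 \<le> v1" "u2 \<le> v2"
    using assms unfolding faces_alt by (auto simp del: cbox_idem)
  show ?thesis using that[OF Fd] box_in_faces[OF assms(1,2) Fd(2,3)] assms(3) Fd(1) by simp
qed

lemma nondeg: assumes "conforming_partition \<Omega> T" "((a,b),(c,d)) \<in> T" shows "a < c \<and> b < d"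
proof -
  have "\<forall>E\<in>T. fst (fst E) < fst (snd E) \<and> snd (fst E) < snd (snd E)"
    using assms(1) unfolding conforming_partition_def by (elim conjE)
  from bspec[OF this assms(2)] show ?thesis by simp
qed

lemma cp_inter: assumes "conforming_partition \<Omega> T" "E \<in> T" "E' \<in> T" "E \<noteq> E'"
   "elem_set E \<inter> elem_set E' \<noteq> {}"
  shows "elem_set E \<inter> elem_set E' \<in> faces E" "elem_set E \<inter> elem_set E' \<in> faces E'"
proof -
  have "\<forall>E\<in>T. \<forall>E'\<in>T. E \<noteq> E' \<longrightarrow>
        elem_set E \<inter> elem_set E' = {} \<or> elem_set E \<inter> elem_set E' \<in> faces E \<inter> faces E'"
    using assms(1) unfolding conforming_partition_def by (elim conjE)
  then have "elem_set E \<inter> elem_set E' \<in> faces E \<inter> faces E'" using assms(2-5) by blast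
  then show "elem_set E \<inter> elem_set E' \<in> faces E" "elem_set E \<inter> elem_set E' \<in> faces E'" by auto
qed

lemma node_vert:
  assumes cp: "conforming_partition \<Omega> T" and E: "E \<in> T" and P: "P \<in> nodes T" "P \<in> elem_set E"
  shows "P \<in> verts E"
proof (rule ccontr)
  assume nP: "P \<notin> verts E"
  obtain E' where E': "E' \<in> T" "P \<in> verts E'" using P unfolding nodes_def by auto
  have ne: "E \<noteq> E'" using nP E' by auto
  obtain a b c d where Ed: "E = ((a,b),(c,d))" by (metis prod.collapse)
  obtain a' b' c' d' where Ed': "E' = ((a',b'),(c',d'))" by (metis prod.collapse)
  obtain p1 p2 where Pd: "P = (p1,p2)" by (metis prod.collapse)
  have nd: "a<c" "b<d" "a'<c'" "b'<d'" using nondeg[OF cp] E E' Ed Ed' by auto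
  have PE': "P \<in> elem_set E'" using E'(2) nd unfolding Ed' Pd by (auto simp: verts_def elem_set_def)
  have "elem_set E \<inter> elem_set E' \<noteq> {}" using P PE' by blast
  hence "elem_set E \<inter> elem_set E' \<in> faces E \<inter> faces E'"
    using cp_inter[OF cp E E'(1) ne] by blast
  then have "P \<in> verts E" using coord_lemma[OF nd, of "elem_set E \<inter> elem_set E'" p1 p2] P PE' E'(2)
    unfolding Ed Ed' Pd by auto
  with nP show False by simp
qed

lemma edge_v:
  fixes x0 y :: real
  assumes cp: "conforming_partition \<Omega> T" and K: "((x1,y1),(x2,y2)) \<in> T" and E: "((a,b),(c,d)) \<in> T"
    and q: "(x0,y) \<in> elem_set ((a,b),(c,d))" and x0: "x0 = x1 \<or> x0 = x2" and y: "y1 < y" "y < y2"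
  shows "b = y1 \<and> d = y2 \<and> (a = x0 \<or> c = x0)"
proof (cases "((a,b),(c,d)) = ((x1,y1),(x2,y2))")
  case True then show ?thesis using x0 by auto
next
  case False
  have nd: "a<c" "b<d" "x1<x2" "y1<y2" using nondeg[OF cp] E K by auto
  have qK: "(x0,y) \<in> elem_set ((x1,y1),(x2,y2))" using x0 y nd by (auto simp: elem_set_def)
  let ?F = "elem_set ((a,b),(c,d)) \<inter> elem_set ((x1,y1),(x2,y2))"
  have "?F \<noteq> {}" using q qK by blast
  hence F: "?F \<in> faces ((a,b),(c,d))" "?F \<in> faces ((x1,y1),(x2,y2))"
    using cp_inter[OF cp E K False] by blast+
  obtain u1 u2 v1 v2 where Fd: "?F = cbox (u1,u2) (v1,v2)" "u1 \<le> v1" "u2 \<le> v2"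
    "(u1=a \<or> u1 = c) \<and> (v1=a \<or> v1 = c) \<and> (u2=b \<or> u2 = d) \<and> (v2=b \<or> v2 = d) \<and> (u1 = v1 \<or> u2 = v2)"
    by (rule face_shape[OF nd(1,2) F(1)])
  have h2: "(u1=x1 \<or> u1 = x2) \<and> (v1=x1 \<or> v1 = x2) \<and> (u2=y1 \<or> u2 = y2) \<and> (v2=y1 \<or> v2 = y2) \<and> (u1 = v1 \<or> u2 = v2)"
    using box_in_faces[OF nd(3,4) Fd(2,3)] F(2) Fd(1) by simp
  have m: "u1 \<le> x0" "x0 \<le> v1" "u2 \<le> y" "y \<le> v2" proof -
    have "(x0,y) \<in> ?F" using q qK by blast
    then have "(x0,y) \<in> cbox (u1,u2) (v1,v2)" using Fd(1) by simp
    then show "u1 \<le> x0" "x0 \<le> v1" "u2 \<le> y" "y \<le> v2" by auto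
  qed
  show ?thesis using Fd(4) h2 m nd x0 y by argo
qed

lemma edge_h:
  fixes y0 x :: real
  assumes cp: "conforming_partition \<Omega> T" and K: "((x1,y1),(x2,y2)) \<in> T" and E: "((a,b),(c,d)) \<in> T"
    and q: "(x,y0) \<in> elem_set ((a,b),(c,d))" and y0: "y0 = y1 \<or> y0 = y2" and x: "x1 < x" "x < x2"
  shows "a = x1 \<and> c = x2 \<and> (b = y0 \<or> d = y0)"
proof (cases "((a,b),(c,d)) = ((x1,y1),(x2,y2))")
  case True then show ?thesis using y0 by auto
next
  case False
  have nd: "a<c" "b<d" "x1<x2" "y1<y2" using nondeg[OF cp] E K by auto
  have qK: "(x,y0) \<in> elem_set ((x1,y1),(x2,y2))" using y0 x nd by (auto simp: elem_set_def)
  let ?F = "elem_set ((a,b),(c,d)) \<inter> elem_set ((x1,y1),(x2,y2))"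
  have "?F \<noteq> {}" using q qK by blast
  hence F: "?F \<in> faces ((a,b),(c,d))" "?F \<in> faces ((x1,y1),(x2,y2))"
    using cp_inter[OF cp E K False] by blast+
  obtain u1 u2 v1 v2 where Fd: "?F = cbox (u1,u2) (v1,v2)" "u1 \<le> v1" "u2 \<le> v2"
    "(u1=a \<or> u1 = c) \<and> (v1=a \<or> v1 = c) \<and> (u2=b \<or> u2 = d) \<and> (v2=b \<or> v2 = d) \<and> (u1 = v1 \<or> u2 = v2)"
    by (rule face_shape[OF nd(1,2) F(1)])
  have h2: "(u1=x1 \<or> u1 = x2) \<and> (v1=x1 \<or> v1 = x2) \<and> (u2=y1 \<or> u2 = y2) \<and> (v2=y1 \<or> v2 = y2) \<and> (u1 = v1 \<or> u2 = v2)"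
    using box_in_faces[OF nd(3,4) Fd(2,3)] F(2) Fd(1) by simp
  have m: "u1 \<le> x" "x \<le> v1" "u2 \<le> y0" "y0 \<le> v2" proof -
    have "(x,y0) \<in> ?F" using q qK by blast
    then have "(x,y0) \<in> cbox (u1,u2) (v1,v2)" using Fd(1) by simp
    then show "u1 \<le> x" "x \<le> v1" "u2 \<le> y0" "y0 \<le> v2" by auto
  qed
  show ?thesis using Fd(4) h2 m nd y0 x by argo
qed


lemma sub_arith:
  fixes a b c d p1 p2 q1 q2 :: real
  assumes "a<c" "b<d" "S \<in> sub_rects ((a,b),(c,d))" "(p1,p2) \<in> verts S"
    "(p1,p2) \<in> verts ((a,b),(c,d))" "(q1,q2) \<in> elem_set S"
  shows "\<bar>p1 - q1\<bar> \<le> (c-a)/2 \<and> \<bar>p2 - q2\<bar> \<le> (d-b)/2"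
  using assms(3) unfolding sub_rects_def Let_def prod.case insert_iff empty_iff
  apply (elim disjE)
  using assms(1,2,4-6) by (auto simp: verts_alt elem_set_def)

lemma sub_in:
  fixes a b c d :: real
  assumes "a<c" "b<d" "S \<in> sub_rects ((a,b),(c,d))"
  shows "verts S \<subseteq> elem_set ((a,b),(c,d))" "elem_set S \<subseteq> elem_set ((a,b),(c,d))"
  using assms(3) unfolding sub_rects_def Let_def prod.case insert_iff empty_iff
  using assms(1,2) by (auto simp: verts_alt elem_set_def cbox_Pair_eq)


lemma ctrl_v:
  fixes x0 y y0 :: real
  assumes cp: "conforming_partition \<Omega> T" and K: "((x1,y1),(x2,y2)) \<in> T"
    and x0: "x0 = x1 \<or> x0 = x2" and y: "y1 < y" "y < y2"
    and y0: "(y0 = y1 \<and> y < (y1+y2)/2) \<or> (y0 = y2 \<and> (y1+y2)/2 < y)"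
    and P: "P \<in> nodes T"
  shows "(x0,y) \<in> ctrl_vol T P \<longleftrightarrow> P = (x0,y0)"
proof
  assume "(x0,y) \<in> ctrl_vol T P"
  then obtain S E where SE: "E \<in> T" "S \<in> sub_rects E" "P \<in> verts S" "(x0,y) \<in> elem_set S"
    unfolding ctrl_vol_def by blast
  obtain a b c d where Ed: "E = ((a,b),(c,d))" by (metis prod.collapse)
  obtain p1 p2 where Pd: "P = (p1,p2)" by (metis prod.collapse)
  have nd: "a<c" "b<d" using nondeg[OF cp] SE(1) Ed by auto
  have qE: "(x0,y) \<in> elem_set E" using sub_in(2)[OF nd] SE Ed by blast
  have PE: "P \<in> elem_set E" using sub_in(1)[OF nd] SE Ed by blast
  have PV: "P \<in> verts E" by (rule node_vert[OF cp SE(1) P PE])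
  have e: "b = y1 \<and> d = y2 \<and> (a = x0 \<or> c = x0)" using edge_v[OF cp K SE(1)[unfolded Ed] qE[unfolded Ed] x0 y] .
  have ar: "\<bar>p1 - x0\<bar> \<le> (c-a)/2 \<and> \<bar>p2 - y\<bar> \<le> (d-b)/2"
    using sub_arith[OF nd, of S p1 p2 x0 y] SE PV Ed Pd by auto
  have pv: "(p1 = a \<or> p1 = c) \<and> (p2 = b \<or> p2 = d)" using PV Ed Pd by (auto simp: verts_alt)
  have "p1 = x0 \<and> p2 = y0" using ar pv e nd y y0 by argo
  then show "P = (x0,y0)" using Pd by simp
next
  assume P0: "P = (x0,y0)"
  have nd: "x1<x2" "y1<y2" using nondeg[OF cp K] by auto
  define m where "m = (x1+x2)/2"
  define n where "n = (y1+y2)/2"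
  define S where "S = ((if x0 = x1 then x1 else m, if y0 = y1 then y1 else n),
                       (if x0 = x1 then m else x2, if y0 = y1 then n else y2))"
  have S: "S \<in> sub_rects ((x1,y1),(x2,y2))"
    using x0 y0 nd unfolding S_def sub_rects_def Let_def m_def n_def by auto
  have "P \<in> verts S" using x0 y0 nd P0 unfolding S_def verts_def m_def n_def by auto
  moreover have "(x0,y) \<in> elem_set S" using x0 y0 y nd unfolding S_def elem_set_def m_def n_def by auto
  ultimately show "(x0,y) \<in> ctrl_vol T P" using S K unfolding ctrl_vol_def by blast
qed


lemma ctrl_h:
  fixes y0 x x0 :: real
  assumes cp: "conforming_partition \<Omega> T" and K: "((x1,y1),(x2,y2)) \<in> T"
    and y0: "y0 = y1 \<or> y0 = y2" and x: "x1 < x" "x < x2"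
    and x0: "(x0 = x1 \<and> x < (x1+x2)/2) \<or> (x0 = x2 \<and> (x1+x2)/2 < x)"
    and P: "P \<in> nodes T"
  shows "(x,y0) \<in> ctrl_vol T P \<longleftrightarrow> P = (x0,y0)"
proof
  assume "(x,y0) \<in> ctrl_vol T P"
  then obtain S E where SE: "E \<in> T" "S \<in> sub_rects E" "P \<in> verts S" "(x,y0) \<in> elem_set S"
    unfolding ctrl_vol_def by blast
  obtain a b c d where Ed: "E = ((a,b),(c,d))" by (metis prod.collapse)
  obtain p1 p2 where Pd: "P = (p1,p2)" by (metis prod.collapse)
  have nd: "a<c" "b<d" using nondeg[OF cp] SE(1) Ed by auto
  have qE: "(x,y0) \<in> elem_set E" using sub_in(2)[OF nd] SE Ed by blast
  have PE: "P \<in> elem_set E" using sub_in(1)[OF nd] SE Ed by blast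
  have PV: "P \<in> verts E" by (rule node_vert[OF cp SE(1) P PE])
  have e: "a = x1 \<and> c = x2 \<and> (b = y0 \<or> d = y0)" using edge_h[OF cp K SE(1)[unfolded Ed] qE[unfolded Ed] y0 x] .
  have ar: "\<bar>p1 - x\<bar> \<le> (c-a)/2 \<and> \<bar>p2 - y0\<bar> \<le> (d-b)/2"
    using sub_arith[OF nd, of S p1 p2 x y0] SE PV Ed Pd by auto
  have pv: "(p1 = a \<or> p1 = c) \<and> (p2 = b \<or> p2 = d)" using PV Ed Pd by (auto simp: verts_alt)
  have "p1 = x0 \<and> p2 = y0" using ar pv e nd x y0 x0 by argo
  then show "P = (x0,y0)" using Pd by simp
next
  assume P0: "P = (x0,y0)"
  have nd: "x1<x2" "y1<y2" using nondeg[OF cp K] by auto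
  define m where "m = (x1+x2)/2"
  define n where "n = (y1+y2)/2"
  define S where "S = ((if x0 = x1 then x1 else m, if y0 = y1 then y1 else n),
                       (if x0 = x1 then m else x2, if y0 = y1 then n else y2))"
  have S: "S \<in> sub_rects ((x1,y1),(x2,y2))"
    using x0 y0 nd unfolding S_def sub_rects_def Let_def m_def n_def by auto
  have "P \<in> verts S" using x0 y0 nd P0 unfolding S_def verts_def m_def n_def by auto
  moreover have "(x,y0) \<in> elem_set S" using x0 y0 x nd unfolding S_def elem_set_def m_def n_def by auto
  ultimately show "(x,y0) \<in> ctrl_vol T P" using S K unfolding ctrl_vol_def by blast
qed

lemma nodes_finite: assumes "conforming_partition \<Omega> T" shows "finite (nodes T)"
proof -
  have "finite T" using assms unfolding conforming_partition_def by (elim conjE)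
  moreover have "\<And>E. finite (verts E)" by (auto simp: verts_def split: prod.splits)
  ultimately show ?thesis unfolding nodes_def by blast
qed

lemma pi_delta:
  assumes cp: "conforming_partition \<Omega> T" and P0: "P0 \<in> nodes T"
    and iff: "\<And>P. P \<in> nodes T \<Longrightarrow> q \<in> ctrl_vol T P \<longleftrightarrow> P = P0"
  shows "Pi_star T v q = v P0"
proof -
  have "Pi_star T v q = (\<Sum>P\<in>nodes T. if P = P0 then v P else 0)"
    unfolding Pi_star_def by (rule sum.cong) (auto simp: indicator_def iff)
  also have "\<dots> = v P0" using P0 nodes_finite[OF cp] by simp
  finally show ?thesis .
qed

lemma pi_v:
  fixes x0 y y0 :: real
  assumes cp: "conforming_partition \<Omega> T" and K: "((x1,y1),(x2,y2)) \<in> T"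
    and x0: "x0 = x1 \<or> x0 = x2" and y: "y1 < y" "y < y2"
    and y0: "(y0 = y1 \<and> y < (y1+y2)/2) \<or> (y0 = y2 \<and> (y1+y2)/2 < y)"
  shows "Pi_star T v (x0,y) = v (x0,y0)"
proof (rule pi_delta[OF cp])
  show "(x0,y0) \<in> nodes T" using K x0 y0 unfolding nodes_def verts_def by auto
qed (rule ctrl_v[OF cp K x0 y y0])

lemma pi_h:
  fixes x0 x y0 :: real
  assumes cp: "conforming_partition \<Omega> T" and K: "((x1,y1),(x2,y2)) \<in> T"
    and y0: "y0 = y1 \<or> y0 = y2" and x: "x1 < x" "x < x2"
    and x0: "(x0 = x1 \<and> x < (x1+x2)/2) \<or> (x0 = x2 \<and> (x1+x2)/2 < x)"
  shows "Pi_star T v (x,y0) = v (x0,y0)"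
proof (rule pi_delta[OF cp])
  show "(x0,y0) \<in> nodes T" using K x0 y0 unfolding nodes_def verts_def by auto
qed (rule ctrl_h[OF cp K y0 x x0])



lemma poly_int:
  fixes s t \<alpha> \<beta> k u :: real
  assumes "s \<le> t"
  shows "((\<lambda>y. (\<alpha>+\<beta>*y)*(k*(y-u))) has_integral
     ((\<lambda>y. k*(\<beta>*y^3/3 + (\<alpha>-\<beta>*u)*y^2/2 - \<alpha>*u*y)) t - (\<lambda>y. k*(\<beta>*y^3/3 + (\<alpha>-\<beta>*u)*y^2/2 - \<alpha>*u*y)) s)) {s..t}"
proof (rule fundamental_theorem_of_calculus[OF assms])
  fix x :: real assume "x \<in> {s..t}"
  have "((\<lambda>y. k*(\<beta>*y^3/3 + (\<alpha>-\<beta>*u)*y^2/2 - \<alpha>*u*y)) has_real_derivative (\<alpha>+\<beta>*x)*(k*(x-u))) (at x within {s..t})"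
    by (auto intro!: derivative_eq_intros simp: field_simps power2_eq_square)
  then show "((\<lambda>y. k*(\<beta>*y^3/3 + (\<alpha>-\<beta>*u)*y^2/2 - \<alpha>*u*y)) has_vector_derivative (\<alpha>+\<beta>*x)*(k*(x-u))) (at x within {s..t})"
    by (simp add: has_real_derivative_iff_has_vector_derivative)
qed

lemma half_edge:
  fixes s t \<alpha> \<beta> k :: real and g :: "real \<Rightarrow> real"
  assumes st: "s < t"
    and g1: "\<And>y. s < y \<Longrightarrow> y < (s+t)/2 \<Longrightarrow> g y = k*(y-s)"
    and g2: "\<And>y. (s+t)/2 < y \<Longrightarrow> y < t \<Longrightarrow> g y = k*(y-t)"
  shows "integral {s..t} (\<lambda>y. (\<alpha>+\<beta>*y)*g y) = -k*\<beta>*(t-s)^3/24"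
proof -
  define m where "m = (s+t)/2"
  have sm: "s \<le> m" "m \<le> t" using st by (auto simp: m_def)
  have i1: "((\<lambda>y. (\<alpha>+\<beta>*y)*g y) has_integral
     ((\<lambda>y. k*(\<beta>*y^3/3 + (\<alpha>-\<beta> * s)*y^2/2 - \<alpha> * s*y)) m - (\<lambda>y. k*(\<beta>*y^3/3 + (\<alpha>-\<beta> * s)*y^2/2 - \<alpha> * s*y)) s)) {s..m}"
    by (rule has_integral_spike_finite[of "{s,m}", OF _ _ poly_int[OF sm(1)]]) (auto simp: g1 m_def)
  have i2: "((\<lambda>y. (\<alpha>+\<beta>*y)*g y) has_integral
     ((\<lambda>y. k*(\<beta>*y^3/3 + (\<alpha>-\<beta>*t)*y^2/2 - \<alpha>*t*y)) t - (\<lambda>y. k*(\<beta>*y^3/3 + (\<alpha>-\<beta>*t)*y^2/2 - \<alpha>*t*y)) m)) {m..t}"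
    by (rule has_integral_spike_finite[of "{m,t}", OF _ _ poly_int[OF sm(2)]]) (auto simp: g2 m_def)
  have "((\<lambda>y. (\<alpha>+\<beta>*y)*g y) has_integral (-k*\<beta>*(t-s)^3/24)) {s..t}"
  proof -
    have e: "((\<lambda>y. k*(\<beta>*y^3/3 + (\<alpha>-\<beta> * s)*y^2/2 - \<alpha> * s*y)) m - (\<lambda>y. k*(\<beta>*y^3/3 + (\<alpha>-\<beta> * s)*y^2/2 - \<alpha> * s*y)) s)
       + ((\<lambda>y. k*(\<beta>*y^3/3 + (\<alpha>-\<beta>*t)*y^2/2 - \<alpha>*t*y)) t - (\<lambda>y. k*(\<beta>*y^3/3 + (\<alpha>-\<beta>*t)*y^2/2 - \<alpha>*t*y)) m)
       = -k*\<beta>*(t-s)^3/24"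
      unfolding m_def by (simp add: field_simps power2_eq_square power3_eq_cube)
    show ?thesis using has_integral_combine[OF sm i1 i2] unfolding e .
  qed
  then show ?thesis by (rule integral_unique)
qed


lemma vert_int:
  fixes x0 \<alpha> \<beta> :: real and F :: "pt \<Rightarrow> pt"
  assumes cp: "conforming_partition \<Omega> T" and K: "((x1,y1),(x2,y2)) \<in> T"
    and x0: "x0 = x1 \<or> x0 = x2"
    and vq: "\<forall>p\<in>elem_set ((x1,y1),(x2,y2)). v p = q1 v0 v1 v2 v3 p"
    and F: "\<And>y. fst (F (x0,y)) = \<alpha> + \<beta>*y"
  shows "integral {y1..y2} (\<lambda>y. fst (F (x0,y)) * (Pi_star T v (x0,y) - v (x0,y))) = (v2+v3*x0)*\<beta>*(y2-y1)^3/24"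
proof -
  have nd: "x1<x2" "y1<y2" using nondeg[OF cp K] by auto
  have inK: "\<And>y. y1 \<le> y \<Longrightarrow> y \<le> y2 \<Longrightarrow> v (x0,y) = q1 v0 v1 v2 v3 (x0,y)"
    using vq x0 nd by (auto simp: elem_set_def)
  have "integral {y1..y2} (\<lambda>y. fst (F (x0,y)) * (Pi_star T v (x0,y) - v (x0,y)))
      = integral {y1..y2} (\<lambda>y. (\<alpha> + \<beta>*y) * (Pi_star T v (x0,y) - v (x0,y)))" by (simp add: F)
  also have "\<dots> = - (-(v2+v3*x0))*\<beta>*(y2-y1)^3/24"
  proof (rule half_edge[OF nd(2)])
    fix y assume y: "y1 < y" "y < (y1+y2)/2"
    have "Pi_star T v (x0,y) = v (x0,y1)" by (rule pi_v[OF cp K x0]) (use y nd in auto)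
    then show "Pi_star T v (x0,y) - v (x0,y) = -(v2+v3*x0)*(y-y1)"
      using inK[of y] inK[of y1] y nd by (simp add: q1_def algebra_simps)
  next
    fix y assume y: "(y1+y2)/2 < y" "y < y2"
    have "Pi_star T v (x0,y) = v (x0,y2)" by (rule pi_v[OF cp K x0]) (use y nd in auto)
    then show "Pi_star T v (x0,y) - v (x0,y) = -(v2+v3*x0)*(y-y2)"
      using inK[of y] inK[of y2] y nd by (simp add: q1_def algebra_simps)
  qed
  finally show ?thesis by simp
qed

lemma hor_int:
  fixes y0 \<alpha> \<beta> :: real and F :: "pt \<Rightarrow> pt"
  assumes cp: "conforming_partition \<Omega> T" and K: "((x1,y1),(x2,y2)) \<in> T"
    and y0: "y0 = y1 \<or> y0 = y2"
    and vq: "\<forall>p\<in>elem_set ((x1,y1),(x2,y2)). v p = q1 v0 v1 v2 v3 p"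
    and F: "\<And>x. snd (F (x,y0)) = \<alpha> + \<beta>*x"
  shows "integral {x1..x2} (\<lambda>x. snd (F (x,y0)) * (Pi_star T v (x,y0) - v (x,y0))) = (v1+v3*y0)*\<beta>*(x2-x1)^3/24"
proof -
  have nd: "x1<x2" "y1<y2" using nondeg[OF cp K] by auto
  have inK: "\<And>x. x1 \<le> x \<Longrightarrow> x \<le> x2 \<Longrightarrow> v (x,y0) = q1 v0 v1 v2 v3 (x,y0)"
    using vq y0 nd by (auto simp: elem_set_def)
  have "integral {x1..x2} (\<lambda>x. snd (F (x,y0)) * (Pi_star T v (x,y0) - v (x,y0)))
      = integral {x1..x2} (\<lambda>x. (\<alpha> + \<beta>*x) * (Pi_star T v (x,y0) - v (x,y0)))" by (simp add: F)
  also have "\<dots> = - (-(v1+v3*y0))*\<beta>*(x2-x1)^3/24"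
  proof (rule half_edge[OF nd(1)])
    fix x assume x: "x1 < x" "x < (x1+x2)/2"
    have "Pi_star T v (x,y0) = v (x1,y0)" by (rule pi_h[OF cp K y0]) (use x nd in auto)
    then show "Pi_star T v (x,y0) - v (x,y0) = -(v1+v3*y0)*(x-x1)"
      using inK[of x] inK[of x1] x nd by (simp add: q1_def algebra_simps)
  next
    fix x assume x: "(x1+x2)/2 < x" "x < x2"
    have "Pi_star T v (x,y0) = v (x2,y0)" by (rule pi_h[OF cp K y0]) (use x nd in auto)
    then show "Pi_star T v (x,y0) - v (x,y0) = -(v1+v3*y0)*(x-x2)"
      using inK[of x] inK[of x2] x nd by (simp add: q1_def algebra_simps)
  qed
  finally show ?thesis by simp
qed



theorem lemma4p2:
  fixes X1 X2 Y1 Y2 x1 x2 y1 y2 :: real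
    and T :: "elem set"
    and a11 a12 a21 a22 :: "pt \<Rightarrow> real"
    and w v :: "pt \<Rightarrow> real"
    and w0 w1 w2 w3 v0 v1 v2 v3 :: real
  assumes "X1 < X2" and "Y1 < Y2"
    and "conforming_partition (box (X1,Y1) (X2,Y2)) T"
    and "\<exists>L. L-lipschitz_on (box (X1,Y1) (X2,Y2)) a11"
    and "\<exists>L. L-lipschitz_on (box (X1,Y1) (X2,Y2)) a12"
    and "\<exists>L. L-lipschitz_on (box (X1,Y1) (X2,Y2)) a21"
    and "\<exists>L. L-lipschitz_on (box (X1,Y1) (X2,Y2)) a22"
    and K: "((x1,y1),(x2,y2)) \<in> T"
    and "w \<in> Uh (box (X1,Y1) (X2,Y2)) T" and "v \<in> Uh (box (X1,Y1) (X2,Y2)) T"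
    and "\<forall>p\<in>elem_set ((x1,y1),(x2,y2)). w p = q1 w0 w1 w2 w3 p"
    and "\<forall>p\<in>elem_set ((x1,y1),(x2,y2)). v p = q1 v0 v1 v2 v3 p"
  shows "let K = ((x1,y1),(x2,y2)); hx = x2 - x1; hy = y2 - y1;
             c11 = cavg K a11; c12 = cavg K a12; c21 = cavg K a21; c22 = cavg K a22
         in bdry_int K
              (\<lambda>p. let g = grad_q1 w0 w1 w2 w3 p
                   in (c11 * fst g + c12 * snd g, c21 * fst g + c22 * snd g))
              (\<lambda>p. Pi_star T v p - v p)
            = hy^3 * hx / 24 * c11 * v3 * w3 + hy * hx^3 / 24 * c22 * v3 * w3"
proof -
  note cp = assms(3)
  define c11 where "c11 = cavg ((x1,y1),(x2,y2)) a11"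
  define c12 where "c12 = cavg ((x1,y1),(x2,y2)) a12"
  define c21 where "c21 = cavg ((x1,y1),(x2,y2)) a21"
  define c22 where "c22 = cavg ((x1,y1),(x2,y2)) a22"
  define F where "F = (\<lambda>p. let g = grad_q1 w0 w1 w2 w3 p
                   in (c11 * fst g + c12 * snd g, c21 * fst g + c22 * snd g))"
  have F1: "\<And>x0 y. fst (F (x0,y)) = (c11*w1 + c12*(w2+w3*x0)) + (c11*w3)*y"
    by (simp add: F_def grad_q1_def algebra_simps)
  have F2: "\<And>x y0. snd (F (x,y0)) = (c21*(w1+w3*y0) + c22*w2) + (c22*w3)*x"
    by (simp add: F_def grad_q1_def algebra_simps)
  note vq = assms(12)
  have V: "\<And>x0. x0 = x1 \<or> x0 = x2 \<Longrightarrow> integral {y1..y2} (\<lambda>y. fst (F (x0,y)) * (Pi_star T v (x0,y) - v (x0,y)))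
      = (v2+v3*x0)*(c11*w3)*(y2-y1)^3/24"
    by (rule vert_int[OF cp K _ vq F1])
  have H: "\<And>y0. y0 = y1 \<or> y0 = y2 \<Longrightarrow> integral {x1..x2} (\<lambda>x. snd (F (x,y0)) * (Pi_star T v (x,y0) - v (x,y0)))
      = (v1+v3*y0)*(c22*w3)*(x2-x1)^3/24"
    by (rule hor_int[OF cp K _ vq F2])
  have "bdry_int ((x1,y1),(x2,y2)) F (\<lambda>p. Pi_star T v p - v p)
     = (y2-y1)^3 * (x2-x1) / 24 * c11 * v3 * w3 + (y2-y1) * (x2-x1)^3 / 24 * c22 * v3 * w3"
    unfolding bdry_int_def prod.case
    by (simp only: V H simp_thms) (simp add: field_simps)
  then show ?thesis unfolding Let_def F_def c11_def c12_def c21_def c22_def .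
qed

end
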